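(* Let $D_K$ be a relative $K$-entropy satisfying Properties (a), (b) and (c) below, and let $H_K$ be the associated conditional entropy, defined by one of the two forms below. Let $X=\{X_j\}$ be an arbitrary POVM on $\mathcal{H}_A$. Then for every density operator $\rho_{AB}$, $$H_K(X|B)\ge\log\frac{1}{c'(X)}+H_K(A|B),\qquad c'(X):=\max_j\mathrm{Tr}(X_j).$$
   Context: All Hilbert spaces are finite-dimensional; $\log$ has an arbitrary but fixed base. A relative $K$-entropy $D_K$ assigns to every pair $(S,T)$ of positive semidefinite operators on a common Hilbert space an extended real number $D_K(S\|T)$. Properties: (a) for every trace-preserving completely positive map (TPCPM) $\mathcal{E}$ (possibly between different spaces), $D_K(\mathcal{E}(S)\|\mathcal{E}(T))\le D_K(S\|T)$; (b) for positive semidefinite $S,T$ on $\mathcal{H}$ and $T'$ on $\mathcal{H}'$, $D_K(S\oplus 0\,\|\,T\oplus T')=D_K(S\|T)$; (c) for every constant $c>0$, $D_K(S\|cT)=D_K(S\|T)+\log\frac1c$. The conditional $K$-entropy of a density operator $\rho_{AB}$ is either $H_K(A|B)=-D_K(\rho_{AB}\|\mathbb{1}_A\otimes\rho_B)$ for all $\rho_{AB}$, or $H_K(A|B)=\max_{\sigma_B}[-D_K(\rho_{AB}\|\mathbb{1}_A\otimes\sigma_B)]$ for all $\rho_{AB}$, maximum over density operators $\sigma_B$. For a POVM $X=\{X_j\}$ on $\mathcal{H}_A$, let $\mathcal{X}:\rho_A\mapsto\sum_j|j\rangle\langle j|_X\,\mathrm{Tr}(X_j\rho_A)$ with $\{|j\rangle\}$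 orthonormal in a register $\mathcal{H}_X$; $H_K(X|B)$ denotes $H_K$ of the state $(\mathcal{X}\otimes\mathcal{I})(\rho_{AB})$ (register $X$ given $B$). *)

theory Defs
  imports "Jordan_Normal_Form.Matrix" "HOL-Library.Extended_Real"
begin

text \<open>Operators on an n-dimensional Hilbert space are n x n complex matrices.
  Composite systems A B are indexed by (i,k) <-> i * dB + k.\<close>

definition mtrace :: "complex mat \<Rightarrow> complex" where
  "mtrace M = (\<Sum>i<dim_row M. M $$ (i, i))"

definition qform :: "nat \<Rightarrow> complex mat \<Rightarrow> (nat \<Rightarrow> complex) \<Rightarrow> complex" where
  "qform n M v = (\<Sum>i<n. \<Sum>j<n. cnj (v i) * M $$ (i, j) * v j)"

definition psd :: "nat \<Rightarrow> complex mat \<Rightarrow> bool" where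
  "psd n M \<longleftrightarrow> M \<in> carrier_mat n n \<and>
     (\<forall>v. Im (qform n M v) = 0 \<and> Re (qform n M v) \<ge> 0)"

definition density :: "nat \<Rightarrow> complex mat \<Rightarrow> bool" where
  "density n M \<longleftrightarrow> psd n M \<and> mtrace M = 1"

definition kron :: "complex mat \<Rightarrow> complex mat \<Rightarrow> complex mat" where
  "kron P Q = mat (dim_row P * dim_row Q) (dim_col P * dim_col Q)
     (\<lambda>(i, j). P $$ (i div dim_row Q, j div dim_col Q) * Q $$ (i mod dim_row Q, j mod dim_col Q))"

definition dsum :: "complex mat \<Rightarrow> complex mat \<Rightarrow> complex mat" where
  "dsum S T = four_block_mat S (0\<^sub>m (dim_row S) (dim_col T)) (0\<^sub>m (dim_row T) (dim_col S)) T"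

definition ptrace_A :: "nat \<Rightarrow> nat \<Rightarrow> complex mat \<Rightarrow> complex mat" where
  "ptrace_A dA dB R = mat dB dB (\<lambda>(k, l). \<Sum>i<dA. R $$ (i * dB + k, i * dB + l))"

text \<open>Trace-preserving completely positive maps from n x n to m x m operators.
  (id_k tensor E) acts blockwise on a (k*n) x (k*n) matrix (ancilla first).\<close>
definition id_tensor :: "nat \<Rightarrow> nat \<Rightarrow> nat \<Rightarrow> (complex mat \<Rightarrow> complex mat) \<Rightarrow> complex mat \<Rightarrow> complex mat" where
  "id_tensor k n m E M = mat (k * m) (k * m)
     (\<lambda>(i, j). E (mat n n (\<lambda>(s, t). M $$ ((i div m) * n + s, (j div m) * n + t))) $$ (i mod m, j mod m))"

definition tpcpm :: "nat \<Rightarrow> nat \<Rightarrow> (complex mat \<Rightarrow> complex mat) \<Rightarrow> bool" where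
  "tpcpm n m E \<longleftrightarrow>
     (\<forall>P \<in> carrier_mat n n. E P \<in> carrier_mat m m) \<and>
     (\<forall>P \<in> carrier_mat n n. \<forall>Q \<in> carrier_mat n n. E (P + Q) = E P + E Q) \<and>
     (\<forall>P \<in> carrier_mat n n. \<forall>c. E (c \<cdot>\<^sub>m P) = c \<cdot>\<^sub>m E P) \<and>
     (\<forall>P \<in> carrier_mat n n. mtrace (E P) = mtrace P) \<and>
     (\<forall>k M. psd (k * n) M \<longrightarrow> psd (k * m) (id_tensor k n m E M))"

text \<open>Properties (a), (b), (c) of a relative K-entropy with logarithm base b.\<close>
definition rel_K_entropy :: "real \<Rightarrow> (complex mat \<Rightarrow> complex mat \<Rightarrow> ereal) \<Rightarrow> bool" where
  "rel_K_entropy b D \<longleftrightarrow>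
     (\<forall>n m E S T. tpcpm n m E \<longrightarrow> psd n S \<longrightarrow> psd n T \<longrightarrow> D (E S) (E T) \<le> D S T) \<and>
     (\<forall>n n' S T T'. psd n S \<longrightarrow> psd n T \<longrightarrow> psd n' T' \<longrightarrow>
        D (dsum S (0\<^sub>m n' n')) (dsum T T') = D S T) \<and>
     (\<forall>n S T c. psd n S \<longrightarrow> psd n T \<longrightarrow> c > 0 \<longrightarrow>
        D S (complex_of_real c \<cdot>\<^sub>m T) = D S T + ereal (log b (1 / c)))"

text \<open>If first_form, H = -D(rho || 1_A tensor rho_B); otherwise the optimised form
  (supremum over density operators sigma_B; equals the maximum when attained).\<close>
definition cond_K_entropy :: "(complex mat \<Rightarrow> complex mat \<Rightarrow> ereal) \<Rightarrow> bool \<Rightarrow> nat \<Rightarrow> nat \<Rightarrow> complex mat \<Rightarrow> ereal" where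
  "cond_K_entropy D first_form dA dB R =
     (if first_form then - D R (kron (1\<^sub>m dA) (ptrace_A dA dB R))
      else (SUP \<sigma>\<in>{\<sigma>. density dB \<sigma>}. - D R (kron (1\<^sub>m dA) \<sigma>)))"

definition povm :: "nat \<Rightarrow> nat \<Rightarrow> (nat \<Rightarrow> complex mat) \<Rightarrow> bool" where
  "povm dA m X \<longleftrightarrow> (\<forall>j<m. psd dA (X j)) \<and> 
     (\<forall>i<dA. \<forall>i'<dA. (\<Sum>j<m. X j $$ (i, i')) = (if i = i' then 1 else 0))"

text \<open>(calX tensor id)(rho_AB): the post-measurement state on register X (dim m) tensor B,
  sum_j |j><j| tensor Tr_A((X_j tensor 1) rho_AB).\<close>
definition meas_XB :: "nat \<Rightarrow> nat \<Rightarrow> nat \<Rightarrow> (nat \<Rightarrow> complex mat) \<Rightarrow> complex mat \<Rightarrow> complex mat" where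
  "meas_XB dA dB m X R = mat (m * dB) (m * dB)
     (\<lambda>(p, q). if p div dB = q div dB then
        (\<Sum>i<dA. \<Sum>i'<dA. X (p div dB) $$ (i, i') * R $$ (i' * dB + p mod dB, i * dB + q mod dB))
      else 0)"

definition c_prime :: "nat \<Rightarrow> (nat \<Rightarrow> complex mat) \<Rightarrow> real" where
  "c_prime m X = Max ((\<lambda>j. Re (mtrace (X j))) ` {..<m})"

end

theory Submission
  imports Defs
begin

lemma lt_mult_add: "(x::nat) < a \<Longrightarrow> y < b \<Longrightarrow> x * b + y < a * b"
proof -
  assume "x < a" "y < b"
  hence "x * b + y < x * b + b" by simp
  also have "\<dots> = (x+1) * b" by simp
  also have "\<dots> \<le> a * b" using \<open>x<a\<close> by (intro mult_right_mono) auto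
  finally show ?thesis .
qed

lemma sum_split: "(\<Sum>p<(a::nat)*b. f p) = (\<Sum>x<a. \<Sum>y<b. f (x*b+y))"
proof (induction a)
  case 0 then show ?case by simp
next
  case (Suc a)
  have "{..<Suc a * b} = {..<a*b} \<union> {a*b..<a*b+b}" by auto
  hence "(\<Sum>p<Suc a*b. f p) = (\<Sum>p<a*b. f p) + (\<Sum>p\<in>{a*b..<a*b+b}. f p)"
    by (simp add: sum.union_disjoint ivl_disj_int)
  also have "(\<Sum>p\<in>{a*b..<a*b+b}. f p) = (\<Sum>y<b. f (a*b+y))"
  proof -
    have "{a*b..<a*b+b} = (\<lambda>y. a*b+y) ` {..<b}"
      using image_add_atLeastLessThan[of "a*b" 0 b] by (simp add: lessThan_atLeast0 add.commute)
    thus ?thesis by (simp add: sum.reindex)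
  qed
  finally show ?case using Suc by simp
qed
lemma sum_split_delta_mod:
  assumes "l < (b::nat)"
  shows "(\<Sum>s<a*b. if s mod b = l then f s else 0) = (\<Sum>x<a. f (x*b+l))"
proof -
  have "\<And>x. (\<Sum>y<b. if (x * b + y) mod b = l then f (x * b + y) else 0) = f (x*b+l)"
  proof -
    fix x
    have "(\<Sum>y<b. if (x * b + y) mod b = l then f (x * b + y) else 0)
       = (\<Sum>y<b. if y = l then f (x * b + y) else 0)"
      by (intro sum.cong refl) (simp add: mod_mult_self3)
    also have "\<dots> = f (x*b+l)" using assms by (simp add: sum.delta')
    finally show "?thesis x" .
  qed
  thus ?thesis unfolding sum_split by simp
qed

lemma qform_add_delta:
  assumes "k < n"
  shows "qform n M (\<lambda>i. v i + (if i = k then t else 0)) = qform n M v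
     + cnj t * (\<Sum>j<n. M$$(k,j) * v j) + t * (\<Sum>i<n. cnj (v i) * M$$(i,k)) + cnj t * t * M$$(k,k)"
proof -
  let ?d = "\<lambda>i. if i = k then t else (0::complex)"
  have e: "\<And>i j. cnj (v i + ?d i) * M$$(i,j) * (v j + ?d j) =
     cnj (v i) * M$$(i,j) * v j + cnj (v i) * M$$(i,j) * ?d j + cnj (?d i) * M$$(i,j) * v j
     + cnj (?d i) * M$$(i,j) * ?d j"
    by (simp add: algebra_simps)
  have s2: "(\<Sum>i<n. \<Sum>j<n. cnj (v i) * M$$(i,j) * ?d j) = t * (\<Sum>i<n. cnj (v i) * M$$(i,k))"
    using assms by (simp add: sum_distrib_left algebra_simps if_distrib sum.delta' cong: if_cong)
  have s3i: "\<And>i. (\<Sum>j<n. cnj (?d i) * M$$(i,j) * v j) = (if i = k then cnj t * (\<Sum>j<n. M$$(k,j) * v j) else 0)"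
    by (simp add: sum_distrib_left algebra_simps)
  have s3: "(\<Sum>i<n. \<Sum>j<n. cnj (?d i) * M$$(i,j) * v j) = cnj t * (\<Sum>j<n. M$$(k,j) * v j)"
    unfolding s3i using assms by (simp add: sum.delta')
  have s4i: "\<And>i. (\<Sum>j<n. cnj (?d i) * M$$(i,j) * ?d j) = (if i = k then cnj t * t * M$$(k,k) else 0)"
    using assms by (simp add: algebra_simps if_distrib sum.delta' cong: if_cong)
  have s4: "(\<Sum>i<n. \<Sum>j<n. cnj (?d i) * M$$(i,j) * ?d j) = cnj t * t * M$$(k,k)"
    unfolding s4i using assms by (simp add: sum.delta')
  show ?thesis unfolding qform_def e sum.distrib s2 s3 s4 by (simp add: algebra_simps)
qed

lemma qform_delta:
  assumes "k < n"
  shows "qform n M (\<lambda>i. if i = k then t else 0) = cnj t * t * M$$(k,k)"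
  using qform_add_delta[OF assms, of M "\<lambda>_. 0" t] by (simp add: qform_def)

lemma qform_two:
  assumes "i < n" "j < n"
  shows "qform n M (\<lambda>x. (if x = i then 1 else 0) + (if x = j then t else 0))
     = M$$(i,i) + cnj t * M$$(j,i) + t * M$$(i,j) + cnj t * t * M$$(j,j)"
proof -
  have "qform n M (\<lambda>x. (if x = i then 1 else 0) + (if x = j then t else 0))
     = qform n M (\<lambda>x. if x = i then 1 else 0)
     + cnj t * (\<Sum>j'<n. M$$(j,j') * (if j' = i then 1 else 0)) + t * (\<Sum>i'<n. cnj (if i' = i then 1 else 0) * M$$(i',j)) + cnj t * t * M$$(j,j)"
    by (rule qform_add_delta[OF assms(2)])
  also have "\<dots> = M$$(i,i) + cnj t * M$$(j,i) + t * M$$(i,j) + cnj t * t * M$$(j,j)"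
  proof -
    have e1: "\<And>j'. M$$(j,j') * (if j' = i then 1 else 0) = (if j' = i then M$$(j,i) else 0)" by simp
    have e2: "\<And>i'. cnj (if i' = i then 1 else 0) * M$$(i',j) = (if i' = i then M$$(i,j) else 0)" by simp
    show ?thesis unfolding e1 e2 using assms qform_delta[OF assms(1), of M 1] by (simp add: sum.delta')
  qed
  finally show ?thesis .
qed

lemma psd_diag:
  assumes "psd n M" "k < n"
  shows "Im (M$$(k,k)) = 0" "Re (M$$(k,k)) \<ge> 0"
proof -
  have "qform n M (\<lambda>i. if i = k then 1 else 0) = M$$(k,k)" using qform_delta[OF assms(2), of M 1] by simp
  thus "Im (M$$(k,k)) = 0" "Re (M$$(k,k)) \<ge> 0" using assms(1) unfolding psd_def by metis+
qed

lemma psd_herm: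
  assumes "psd n M" "i < n" "j < n"
  shows "M$$(i,j) = cnj (M$$(j,i))"
proof -
  have q: "Im (M$$(i,i) + cnj t * M$$(j,i) + t * M$$(i,j) + cnj t * t * M$$(j,j)) = 0" for t
  proof -
    have "Im (qform n M (\<lambda>x. (if x = i then 1 else 0) + (if x = j then t else 0))) = 0"
      using assms(1) unfolding psd_def by blast
    thus ?thesis unfolding qform_two[OF assms(2,3)] .
  qed
  have d1: "Im (M$$(i,i)) = 0" "Im (M$$(j,j)) = 0" using psd_diag assms by auto
  have a: "Im (M$$(j,i)) + Im (M$$(i,j)) = 0" using q[of 1] d1 by simp
  have b: "- Re (M$$(j,i)) + Re (M$$(i,j)) = 0" using q[of \<i>] d1 by simp
  show ?thesis using a b by (simp add: complex_eq_iff)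
qed

lemma psd_zero_row:
  assumes "psd n M" "k < n" "M$$(k,k) = 0" "j < n"
  shows "M$$(k,j) = 0"
proof (rule ccontr)
  let ?z = "M$$(k,j)"
  define P where "P = Re ?z ^ 2 + Im ?z ^ 2"
  assume nz: "?z \<noteq> 0"
  hence pos: "P > 0" unfolding P_def
    by (simp add: complex_neq_0)
  define s where "s = (Re (M$$(j,j)) + 1) / (2 * P)"
  define t where "t = - complex_of_real s * ?z"
  have h: "M$$(j,k) = cnj ?z" using psd_herm[OF assms(1,4,2)] .
  have "Re (qform n M (\<lambda>x. (if x = j then 1 else 0) + (if x = k then t else 0))) \<ge> 0"
    using assms(1) unfolding psd_def by blast
  hence "Re (M$$(j,j) + cnj t * M$$(k,j) + t * M$$(j,k) + cnj t * t * M$$(k,k)) \<ge> 0"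
    unfolding qform_two[OF assms(4,2)] .
  moreover have "M$$(j,j) + cnj t * M$$(k,j) + t * M$$(j,k) + cnj t * t * M$$(k,k)
     = M$$(j,j) - complex_of_real s * (?z * cnj ?z) - complex_of_real s * (?z * cnj ?z)"
    unfolding h t_def assms(3) by (simp add: algebra_simps)
  moreover have "?z * cnj ?z = complex_of_real P" unfolding P_def by (rule complex_mult_cnj)
  ultimately have "Re (M$$(j,j) - complex_of_real s * complex_of_real P - complex_of_real s * complex_of_real P) \<ge> 0"
    by metis
  hence "Re (M$$(j,j)) - 2 * s * P \<ge> 0" by (simp add: mult.commute mult.left_commute)
  moreover have "2 * s * P = Re (M$$(j,j)) + 1"
    unfolding s_def using pos by (simp add: field_simps)
  ultimately show False by simp
qed

lemma psd_eliminate: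
  assumes X: "psd n X" and k: "k < n" and d: "X$$(k,k) \<noteq> 0"
  shows "psd n (mat n n (\<lambda>(i,j). X$$(i,j) - X$$(i,k) * X$$(k,j) / X$$(k,k)))"
proof -
  let ?d = "X$$(k,k)"
  let ?X' = "mat n n (\<lambda>(i,j). X$$(i,j) - X$$(i,k) * X$$(k,j) / ?d)"
  have dr: "cnj ?d = ?d" using psd_diag(1)[OF X k] by (simp add: complex_eq_iff)
  have main: "qform n ?X' v = qform n X (\<lambda>i. v i + (if i = k then - (\<Sum>j<n. X$$(k,j) * v j) / ?d else 0))" for v
  proof -
    define \<alpha> where "\<alpha> = (\<Sum>j<n. X$$(k,j) * v j)"
    define \<beta> where "\<beta> = (\<Sum>i<n. cnj (v i) * X$$(i,k))"
    have ab: "\<beta> = cnj \<alpha>" unfolding \<alpha>_def \<beta>_def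
      by (auto simp: psd_herm[OF X _ k] intro!: sum.cong)
    have "qform n ?X' v = (\<Sum>i<n. \<Sum>j<n. cnj (v i) * X$$(i,j) * v j - (cnj (v i) * X$$(i,k)) * (X$$(k,j) * v j) / ?d)"
      unfolding qform_def by (intro sum.cong refl) (simp add: algebra_simps)
    also have "\<dots> = qform n X v - \<beta> * \<alpha> / ?d"
      unfolding qform_def \<alpha>_def \<beta>_def sum_subtractf sum_divide_distrib sum_distrib_left sum_distrib_right
      by (simp add: sum_distrib_left, rule sum.swap)
    also have "\<dots> = qform n X v + cnj (- \<alpha> / ?d) * \<alpha> + (- \<alpha> / ?d) * \<beta> + cnj (- \<alpha> / ?d) * (- \<alpha> / ?d) * ?d"
      using d dr ab by (simp add: field_simps)
    also have "\<dots> = qform n X (\<lambda>i. v i + (if i = k then - \<alpha> / ?d else 0))"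
      unfolding qform_add_delta[OF k] \<alpha>_def \<beta>_def ..
    finally show ?thesis unfolding \<alpha>_def .
  qed
  show ?thesis unfolding psd_def main using X unfolding psd_def by auto
qed

lemma psd_decomp_aux:
  assumes "k \<le> n"
  shows "psd n X \<Longrightarrow> (\<forall>i<n. \<forall>j<n. (k \<le> i \<or> k \<le> j) \<longrightarrow> X$$(i,j) = 0) \<Longrightarrow>
    \<exists>W. \<forall>i<n. \<forall>j<n. X$$(i,j) = (\<Sum>r<k. W r i * cnj (W r j))"
  using assms
proof (induction k arbitrary: X)
  case 0
  then show ?case by auto
next
  case (Suc k)
  note X = Suc.prems(1) and supp = Suc.prems(2)
  have k: "k < n" using Suc.prems(3) by simp
  let ?d = "X$$(k,k)"
  show ?case
  proof (cases "?d = 0")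
    case True
    have row: "X$$(k,j) = 0" if "j < n" for j using psd_zero_row[OF X k True that] .
    have col: "X$$(j,k) = 0" if "j < n" for j using psd_herm[OF X that k] row[OF that] by simp
    have "\<forall>i<n. \<forall>j<n. (k \<le> i \<or> k \<le> j) \<longrightarrow> X$$(i,j) = 0"
    proof (intro allI impI)
      fix i j assume "i < n" "j < n" "k \<le> i \<or> k \<le> j"
      thus "X$$(i,j) = 0" using supp row col by (cases "i = k"; cases "j = k") auto
    qed
    then obtain W where W: "\<forall>i<n. \<forall>j<n. X$$(i,j) = (\<Sum>r<k. W r i * cnj (W r j))"
      using Suc.IH[OF X] k by auto
    show ?thesis
      by (rule exI[of _ "W(k := (\<lambda>_. 0))"]) (simp add: W)
  next
    case False
    let ?X' = "mat n n (\<lambda>(i,j). X$$(i,j) - X$$(i,k) * X$$(k,j) / ?d)"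
    have X': "psd n ?X'" by (rule psd_eliminate[OF X k False])
    have "\<forall>i<n. \<forall>j<n. (k \<le> i \<or> k \<le> j) \<longrightarrow> ?X'$$(i,j) = 0"
    proof (intro allI impI)
      fix i j assume ij: "i < n" "j < n" "k \<le> i \<or> k \<le> j"
      show "?X'$$(i,j) = 0"
      proof (cases "i = k \<or> j = k")
        case True thus ?thesis using ij False by auto
      next
        case F: False
        hence "Suc k \<le> i \<or> Suc k \<le> j" using ij by auto
        hence "X$$(i,j) = 0" "X$$(i,k) = 0 \<or> X$$(k,j) = 0" using supp ij k by auto
        thus ?thesis using ij by auto
      qed
    qed
    note supp' = this
    have kn: "k \<le> n" using k by simp
    from Suc.IH[OF X' supp' kn] obtain W where W: "\<forall>i<n. \<forall>j<n. ?X'$$(i,j) = (\<Sum>r<k. W r i * cnj (W r j))"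
      by blast
    have dr: "?d = complex_of_real (Re ?d)" using psd_diag(1)[OF X k] by (simp add: complex_eq_iff)
    have dpos: "Re ?d > 0" using psd_diag[OF X k] False dr by (metis less_eq_real_def of_real_0)
    define w where "w = (\<lambda>i. X$$(i,k) / complex_of_real (sqrt (Re ?d)))"
    have ww: "w i * cnj (w j) = X$$(i,k) * X$$(k,j) / ?d" if "i < n" "j < n" for i j
    proof -
      have "cnj (X$$(j,k)) = X$$(k,j)" using psd_herm[OF X k that(2)] by simp
      moreover have "complex_of_real (sqrt (Re ?d)) * complex_of_real (sqrt (Re ?d)) = ?d"
      proof -
        have s1: "sqrt (Re ?d) * sqrt (Re ?d) = Re ?d" using dpos by simp
        have "complex_of_real (sqrt (Re ?d)) * complex_of_real (sqrt (Re ?d)) = complex_of_real (Re ?d)"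
          by (simp only: of_real_mult[symmetric] s1)
        thus ?thesis by (rule trans[OF _ dr[symmetric]])
      qed
      ultimately show ?thesis unfolding w_def by (simp add: field_simps)
    qed
    show ?thesis
    proof (rule exI[of _ "W(k := w)"], intro allI impI)
      fix i j assume ij: "i < n" "j < n"
      have "(\<Sum>r<Suc k. (W(k := w)) r i * cnj ((W(k := w)) r j)) = (\<Sum>r<k. W r i * cnj (W r j)) + w i * cnj (w j)"
        by simp
      also have "\<dots> = ?X'$$(i,j) + X$$(i,k) * X$$(k,j) / ?d" using W ij ww by simp
      also have "\<dots> = X$$(i,j)" using ij by simp
      finally show "X$$(i,j) = (\<Sum>r<Suc k. (W(k := w)) r i * cnj ((W(k := w)) r j))" by simp
    qed
  qed
qed

lemma psd_decomp:
  assumes "psd n X"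
  shows "\<exists>W. \<forall>i<n. \<forall>j<n. X$$(i,j) = (\<Sum>r<n. W r i * cnj (W r j))"
  using psd_decomp_aux[of n n X] assms by auto

lemma sum_rot3: "(\<Sum>p\<in>A. \<Sum>q\<in>B. \<Sum>r\<in>C. g p q r) = (\<Sum>r\<in>C. \<Sum>p\<in>A. \<Sum>q\<in>B. g p q r)"
proof -
  have "(\<Sum>p\<in>A. \<Sum>q\<in>B. \<Sum>r\<in>C. g p q r) = (\<Sum>p\<in>A. \<Sum>r\<in>C. \<Sum>q\<in>B. g p q r)"
    by (intro sum.cong refl sum.swap)
  also have "\<dots> = (\<Sum>r\<in>C. \<Sum>p\<in>A. \<Sum>q\<in>B. g p q r)" by (rule sum.swap)
  finally show ?thesis .
qed

lemma sum_swap22: "(\<Sum>p\<in>A. \<Sum>q\<in>B. \<Sum>s\<in>C. \<Sum>t\<in>D. g p q s t) = (\<Sum>s\<in>C. \<Sum>t\<in>D. \<Sum>p\<in>A. \<Sum>q\<in>B. g p q s t)"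
proof -
  have "(\<Sum>p\<in>A. \<Sum>q\<in>B. \<Sum>s\<in>C. \<Sum>t\<in>D. g p q s t) = (\<Sum>s\<in>C. \<Sum>p\<in>A. \<Sum>q\<in>B. \<Sum>t\<in>D. g p q s t)"
    by (rule sum_rot3)
  also have "\<dots> = (\<Sum>s\<in>C. \<Sum>t\<in>D. \<Sum>p\<in>A. \<Sum>q\<in>B. g p q s t)"
    by (intro sum.cong refl sum_rot3)
  finally show ?thesis .
qed

lemma psd_sum_qforms:
  assumes "\<forall>r<R. psd (ns r) (Ms r)"
  shows "Im (\<Sum>r<R. qform (ns r) (Ms r) (u r)) = 0 \<and> Re (\<Sum>r<R. qform (ns r) (Ms r) (u r)) \<ge> 0"
  using assms unfolding psd_def by (auto simp: Im_sum Re_sum intro: sum_nonneg)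

lemma kraus_psd:
  fixes K :: "nat \<Rightarrow> nat \<Rightarrow> nat \<Rightarrow> complex"
  assumes O: "A \<in> carrier_mat m m"
    and M: "\<forall>r<R. psd (ns r) (Ms r)"
    and E: "\<forall>p<m. \<forall>q<m. A$$(p,q) = (\<Sum>r<R. \<Sum>s<ns r. \<Sum>t<ns r. K r p s * Ms r $$ (s,t) * cnj (K r q t))"
  shows "psd m A"
proof -
  have "qform m A v = (\<Sum>r<R. qform (ns r) (Ms r) (\<lambda>t. \<Sum>q<m. cnj (K r q t) * v q))" for v
  proof -
    have "qform m A v = (\<Sum>p<m. \<Sum>q<m. \<Sum>r<R. \<Sum>s<ns r. \<Sum>t<ns r.
        cnj (v p) * K r p s * Ms r $$ (s,t) * cnj (K r q t) * v q)"
      unfolding qform_def using E by (simp add: sum_distrib_left sum_distrib_right mult.assoc)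
    also have "\<dots> = (\<Sum>r<R. \<Sum>p<m. \<Sum>q<m. \<Sum>s<ns r. \<Sum>t<ns r.
        cnj (v p) * K r p s * Ms r $$ (s,t) * cnj (K r q t) * v q)"
      by (rule sum_rot3)
    also have "\<dots> = (\<Sum>r<R. \<Sum>s<ns r. \<Sum>t<ns r. \<Sum>p<m. \<Sum>q<m.
        cnj (v p) * K r p s * Ms r $$ (s,t) * cnj (K r q t) * v q)"
      by (intro sum.cong refl sum_swap22)
    also have "\<dots> = (\<Sum>r<R. qform (ns r) (Ms r) (\<lambda>t. \<Sum>q<m. cnj (K r q t) * v q))"
      unfolding qform_def
      by (simp add: sum_distrib_left sum_distrib_right mult.assoc mult.commute mult.left_commute)
    finally show ?thesis .
  qed
  note q = this
  have "Im (qform m A v) = 0 \<and> Re (qform m A v) \<ge> 0" for v unfolding q by (rule psd_sum_qforms[OF M])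
  then show ?thesis unfolding psd_def using O by blast
qed

lemma sum_split_delta_div:
  assumes "x0 < (a::nat)"
  shows "(\<Sum>S<a*b. if S div b = x0 then g S else 0) = (\<Sum>y<b. g (x0*b+y))"
proof -
  have "\<And>x. (\<Sum>y<b. if (x * b + y) div b = x0 then g (x * b + y) else 0)
      = (if x = x0 then (\<Sum>y<b. g (x0 * b + y)) else 0)"
  proof -
    fix x
    have "(\<Sum>y<b. if (x * b + y) div b = x0 then g (x * b + y) else 0)
      = (\<Sum>y<b. if x = x0 then g (x * b + y) else 0)"
      by (intro sum.cong refl) auto
    thus "?thesis x" by simp
  qed
  thus ?thesis unfolding sum_split using assms by (simp add: sum.delta')
qed

lemma kraus_cp:
  fixes K :: "nat \<Rightarrow> nat \<Rightarrow> nat \<Rightarrow> complex"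
  assumes car: "\<forall>P \<in> carrier_mat n n. E P \<in> carrier_mat m m"
    and form: "\<forall>P \<in> carrier_mat n n. \<forall>p<m. \<forall>q<m. E P $$ (p,q) = (\<Sum>r<R. \<Sum>s<n. \<Sum>t<n. K r p s * P$$(s,t) * cnj (K r q t))"
    and M: "psd (k*n) M"
  shows "psd (k*m) (id_tensor k n m E M)"
proof (rule kraus_psd[where R=R and ns="\<lambda>_. k*n" and Ms="\<lambda>_. M"
      and K="\<lambda>r P S. if S div n = P div m then K r (P mod m) (S mod n) else 0"])
  show "id_tensor k n m E M \<in> carrier_mat (k*m) (k*m)" unfolding id_tensor_def by simp
  show "\<forall>r<R. psd (k*n) M" using M by simp
  show "\<forall>p<k*m. \<forall>q<k*m. id_tensor k n m E M $$ (p,q) = (\<Sum>r<R. \<Sum>S<k*n. \<Sum>T<k*n.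
     (if S div n = p div m then K r (p mod m) (S mod n) else 0) * M $$ (S,T) *
     cnj (if T div n = q div m then K r (q mod m) (T mod n) else 0))"
  proof (intro allI impI)
    fix p q assume p: "p < k*m" and q: "q < k*m"
    have m0: "m > 0" using p by (cases m) auto
    have pd: "p div m < k" using p by (simp add: less_mult_imp_div_less)
    have qd: "q div m < k" using q by (simp add: less_mult_imp_div_less)
    have pm: "p mod m < m" "q mod m < m" using m0 by auto
    let ?B = "mat n n (\<lambda>(s, t). M $$ ((p div m) * n + s, (q div m) * n + t))"
    have B: "?B \<in> carrier_mat n n" by simp
    have "id_tensor k n m E M $$ (p,q) = E ?B $$ (p mod m, q mod m)"
      unfolding id_tensor_def using p q by simp
    also have "\<dots> = (\<Sum>r<R. \<Sum>s<n. \<Sum>t<n. K r (p mod m) s * ?B$$(s,t) * cnj (K r (q mod m) t))"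
      using form B pm by blast
    also have "\<dots> = (\<Sum>r<R. \<Sum>s<n. \<Sum>t<n. K r (p mod m) s * M $$ ((p div m) * n + s, (q div m) * n + t) * cnj (K r (q mod m) t))"
      by (intro sum.cong refl) simp
    also have "\<dots> = (\<Sum>r<R. \<Sum>S<k*n. \<Sum>T<k*n.
     (if S div n = p div m then K r (p mod m) (S mod n) else 0) * M $$ (S,T) *
     cnj (if T div n = q div m then K r (q mod m) (T mod n) else 0))"
    proof (rule sum.cong[OF refl])
      fix r
      have "(\<Sum>S<k*n. \<Sum>T<k*n.
         (if S div n = p div m then K r (p mod m) (S mod n) else 0) * M $$ (S,T) *
         cnj (if T div n = q div m then K r (q mod m) (T mod n) else 0))
       = (\<Sum>S<k*n. if S div n = p div m then (\<Sum>T<k*n. if T div n = q div m then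
           K r (p mod m) (S mod n) * M $$ (S,T) * cnj (K r (q mod m) (T mod n)) else 0) else 0)"
        by (auto intro!: sum.cong)
      also have "\<dots> = (\<Sum>s<n. \<Sum>t<n. K r (p mod m) s * M $$ ((p div m) * n + s, (q div m) * n + t) * cnj (K r (q mod m) t))"
        unfolding sum_split_delta_div[OF pd] sum_split_delta_div[OF qd] by simp
      finally show "(\<Sum>s<n. \<Sum>t<n. K r (p mod m) s * M $$ ((p div m) * n + s, (q div m) * n + t) * cnj (K r (q mod m) t))
        = (\<Sum>S<k*n. \<Sum>T<k*n.
         (if S div n = p div m then K r (p mod m) (S mod n) else 0) * M $$ (S,T) *
         cnj (if T div n = q div m then K r (q mod m) (T mod n) else 0))" by simp
    qed
    finally show "id_tensor k n m E M $$ (p,q) = (\<Sum>r<R. \<Sum>S<k*n. \<Sum>T<k*n.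
     (if S div n = p div m then K r (p mod m) (S mod n) else 0) * M $$ (S,T) *
     cnj (if T div n = q div m then K r (q mod m) (T mod n) else 0))" .
  qed
qed

lemma sum2_delta:
  assumes "finite A" "finite B"
  shows "(\<Sum>s\<in>A. \<Sum>t\<in>B. (if s = a then c else 0) * f s t * cnj (if t = b then d else 0))
     = (if a \<in> A \<and> b \<in> B then c * f a b * cnj d else (0::complex))"
proof -
  have "(\<Sum>s\<in>A. \<Sum>t\<in>B. (if s = a then c else 0) * f s t * cnj (if t = b then d else 0))
     = (\<Sum>s\<in>A. if s = a then (\<Sum>t\<in>B. if t = b then c * f a t * cnj d else 0) else 0)"
    by (auto intro!: sum.cong)
  also have "\<dots> = (if a \<in> A \<and> b \<in> B then c * f a b * cnj d else (0::complex))"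
    using assms by (simp add: sum.delta)
  finally show ?thesis .
qed

lemma psd_dsum:
  assumes S: "psd n1 S" and T: "psd n2 T"
  shows "psd (n1 + n2) (dsum S T)"
proof (rule kraus_psd[where R=2 and ns="\<lambda>r. if r = 0 then n1 else n2" and Ms="\<lambda>r. if r = 0 then S else T"
     and K="\<lambda>r p s. if r = 0 then (if s = p then 1 else 0) else (if s = p - n1 then (if n1 \<le> p then 1 else 0) else 0)"])
  have Sc: "S \<in> carrier_mat n1 n1" and Tc: "T \<in> carrier_mat n2 n2" using S T unfolding psd_def by auto
  show "dsum S T \<in> carrier_mat (n1 + n2) (n1 + n2)" using Sc Tc unfolding dsum_def by auto
  show "\<forall>r<(2::nat). psd (if r = 0 then n1 else n2) (if r = 0 then S else T)" using S T by auto
  show "\<forall>p<n1 + n2. \<forall>q<n1 + n2. dsum S T $$ (p, q) = (\<Sum>r<(2::nat). \<Sum>s<if r = 0 then n1 else n2. \<Sum>t<if r = 0 then n1 else n2.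
          (if r = 0 then (if s = p then 1 else 0) else (if s = p - n1 then (if n1 \<le> p then 1 else 0) else 0)) *
          (if r = 0 then S else T) $$ (s, t) *
          cnj (if r = 0 then (if t = q then 1 else 0) else (if t = q - n1 then (if n1 \<le> q then 1 else 0) else 0)))"
  proof (intro allI impI)
    fix p q assume p: "p < n1 + n2" and q: "q < n1 + n2"
    have "(\<Sum>r<2::nat. \<Sum>s<if r = 0 then n1 else n2. \<Sum>t<if r = 0 then n1 else n2.
          (if r = 0 then (if s = p then 1 else 0) else (if s = p - n1 then (if n1 \<le> p then 1 else 0) else 0)) *
          (if r = 0 then S else T) $$ (s, t) *
          cnj (if r = 0 then (if t = q then 1 else 0) else (if t = q - n1 then (if n1 \<le> q then 1 else 0) else 0)))
      = (\<Sum>s<n1. \<Sum>t<n1. (if s = p then 1 else 0) * S $$ (s, t) * cnj (if t = q then 1 else 0))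
      + (\<Sum>s<n2. \<Sum>t<n2. (if s = p - n1 then (if n1 \<le> p then 1 else 0) else 0) * T $$ (s, t) *
          cnj (if t = q - n1 then (if n1 \<le> q then 1 else 0) else 0))"
      by (simp add: numeral_2_eq_2)
    also have "\<dots> = dsum S T $$ (p, q)"
      unfolding sum2_delta[OF finite_lessThan finite_lessThan] using p q Sc Tc
      by (auto simp: dsum_def)
    finally show "dsum S T $$ (p, q) = (\<Sum>r<(2::nat). \<Sum>s<if r = 0 then n1 else n2. \<Sum>t<if r = 0 then n1 else n2.
          (if r = 0 then (if s = p then 1 else 0) else (if s = p - n1 then (if n1 \<le> p then 1 else 0) else 0)) *
          (if r = 0 then S else T) $$ (s, t) *
          cnj (if r = 0 then (if t = q then 1 else 0) else (if t = q - n1 then (if n1 \<le> q then 1 else 0) else 0)))" by simp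
  qed
qed

definition addblk :: "nat \<Rightarrow> complex mat \<Rightarrow> complex mat" where
  "addblk N M = mat N N (\<lambda>(i,j). M$$(i,j) + M$$(N+i, N+j))"

lemma tpcpm_addblk: "tpcpm (2*N) N (addblk N)"
  unfolding tpcpm_def
proof (intro conjI ballI allI impI)
  fix P :: "complex mat" assume P: "P \<in> carrier_mat (2*N) (2*N)"
  show "addblk N P \<in> carrier_mat N N" unfolding addblk_def by simp
  fix c show "addblk N (c \<cdot>\<^sub>m P) = c \<cdot>\<^sub>m addblk N P"
    unfolding addblk_def using P by (intro eq_matI) (auto simp: algebra_simps)
next
  fix P Q :: "complex mat" assume P: "P \<in> carrier_mat (2*N) (2*N)" and Q: "Q \<in> carrier_mat (2*N) (2*N)"
  show "addblk N (P + Q) = addblk N P + addblk N Q"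
    unfolding addblk_def using P Q by (intro eq_matI) (auto simp: algebra_simps)
next
  fix P :: "complex mat" assume P: "P \<in> carrier_mat (2*N) (2*N)"
  have "mtrace P = (\<Sum>x<2. \<Sum>y<N. P$$(x*N+y, x*N+y))"
    unfolding mtrace_def using P sum_split[where a=2 and b=N and f="\<lambda>i. P$$(i,i)"] by simp
  also have "\<dots> = (\<Sum>y<N. P$$(y,y)) + (\<Sum>y<N. P$$(N+y,N+y))" by (simp add: numeral_2_eq_2)
  also have "\<dots> = mtrace (addblk N P)" unfolding mtrace_def addblk_def by (simp add: sum.distrib)
  finally show "mtrace (addblk N P) = mtrace P" by simp
next
  fix k and M :: "complex mat" assume M: "psd (k * (2*N)) M"
  show "psd (k * N) (id_tensor k (2*N) N (addblk N) M)"
  proof (rule kraus_cp[where R=2 and K="\<lambda>r p s. if r = 0 then (if s = p then 1 else 0) else (if s = N + p then 1 else 0)", OF _ _ M])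
    show "\<forall>P::complex mat\<in>carrier_mat (2 * N) (2 * N). addblk N P \<in> carrier_mat N N" unfolding addblk_def by simp
    show "\<forall>P::complex mat\<in>carrier_mat (2 * N) (2 * N). \<forall>p<N. \<forall>q<N. addblk N P $$ (p, q) =
      (\<Sum>r<(2::nat). \<Sum>s<2 * N. \<Sum>t<2 * N. (if r = 0 then (if s = p then 1 else 0) else (if s = N + p then 1 else 0)) * P $$ (s, t) *
         cnj (if r = 0 then (if t = q then 1 else 0) else (if t = N + q then 1 else 0)))"
    proof (intro ballI allI impI)
      fix P :: "complex mat" and p q assume P: "P \<in> carrier_mat (2 * N) (2 * N)" and p: "p < N" and q: "q < N"
      have "(\<Sum>r<(2::nat). \<Sum>s<2 * N. \<Sum>t<2 * N. (if r = 0 then (if s = p then 1 else 0) else (if s = N + p then 1 else 0)) * P $$ (s, t) *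
         cnj (if r = 0 then (if t = q then 1 else 0) else (if t = N + q then 1 else 0)))
        = (\<Sum>s<2 * N. \<Sum>t<2 * N. (if s = p then 1 else 0) * P $$ (s, t) * cnj (if t = q then 1 else 0))
        + (\<Sum>s<2 * N. \<Sum>t<2 * N. (if s = N + p then 1 else 0) * P $$ (s, t) * cnj (if t = N + q then 1 else 0))"
        by (simp add: numeral_2_eq_2)
      also have "\<dots> = addblk N P $$ (p, q)"
        unfolding sum2_delta[OF finite_lessThan finite_lessThan] addblk_def using p q by simp
      finally show "addblk N P $$ (p, q) = (\<Sum>r<(2::nat). \<Sum>s<2 * N. \<Sum>t<2 * N. (if r = 0 then (if s = p then 1 else 0) else (if s = N + p then 1 else 0)) * P $$ (s, t) *
         cnj (if r = 0 then (if t = q then 1 else 0) else (if t = N + q then 1 else 0)))" by simp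
    qed
  qed
qed

lemma idx_bound: "i < dA \<Longrightarrow> p < m*dB \<Longrightarrow> i*dB + p mod (dB::nat) < dA*dB"
proof -
  assume "i < dA" "p < m*dB"
  hence "dB > 0" by (cases dB) auto
  hence "p mod dB < dB" by simp
  thus ?thesis using lt_mult_add \<open>i < dA\<close> by blast
qed

lemma meas_linear:
  assumes P: "P \<in> carrier_mat (dA*dB) (dA*dB)" and Q: "Q \<in> carrier_mat (dA*dB) (dA*dB)"
  shows "meas_XB dA dB m X (P + Q) = meas_XB dA dB m X P + meas_XB dA dB m X Q"
proof (rule eq_matI)
  fix p q assume p: "p < dim_row (meas_XB dA dB m X P + meas_XB dA dB m X Q)"
    and q: "q < dim_col (meas_XB dA dB m X P + meas_XB dA dB m X Q)"
  hence p': "p < m*dB" and q': "q < m*dB" unfolding meas_XB_def by auto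
  show "meas_XB dA dB m X (P + Q) $$ (p, q) = (meas_XB dA dB m X P + meas_XB dA dB m X Q) $$ (p, q)"
    unfolding meas_XB_def using p' q' P Q idx_bound[OF _ p'] idx_bound[OF _ q']
    by (auto simp: algebra_simps sum.distrib intro!: sum.cong)
qed (auto simp: meas_XB_def)

lemma meas_scale:
  assumes P: "P \<in> carrier_mat (dA*dB) (dA*dB)"
  shows "meas_XB dA dB m X (c \<cdot>\<^sub>m P) = c \<cdot>\<^sub>m meas_XB dA dB m X P"
proof (rule eq_matI)
  fix p q assume p: "p < dim_row (c \<cdot>\<^sub>m meas_XB dA dB m X P)"
    and q: "q < dim_col (c \<cdot>\<^sub>m meas_XB dA dB m X P)"
  hence p': "p < m*dB" and q': "q < m*dB" unfolding meas_XB_def by auto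
  show "meas_XB dA dB m X (c \<cdot>\<^sub>m P) $$ (p, q) = (c \<cdot>\<^sub>m meas_XB dA dB m X P) $$ (p, q)"
    unfolding meas_XB_def using p' q' P idx_bound[OF _ p'] idx_bound[OF _ q']
    by (auto simp: algebra_simps sum_distrib_left intro!: sum.cong)
qed (auto simp: meas_XB_def)

lemma meas_trace:
  assumes X: "povm dA m X" and P: "P \<in> carrier_mat (dA*dB) (dA*dB)"
  shows "mtrace (meas_XB dA dB m X P) = mtrace P"
proof -
  have XS: "\<forall>i<dA. \<forall>i'<dA. (\<Sum>j<m. X j $$ (i, i')) = (if i = i' then 1 else 0)"
    using X unfolding povm_def by blast
  have "mtrace (meas_XB dA dB m X P) = (\<Sum>p<m*dB. \<Sum>i<dA. \<Sum>i'<dA.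
      X (p div dB) $$ (i, i') * P $$ (i' * dB + p mod dB, i * dB + p mod dB))"
    unfolding mtrace_def meas_XB_def by simp
  also have "\<dots> = (\<Sum>j<m. \<Sum>l<dB. \<Sum>i<dA. \<Sum>i'<dA.
      X j $$ (i, i') * P $$ (i' * dB + l, i * dB + l))"
    unfolding sum_split by (intro sum.cong refl) auto
  also have "\<dots> = (\<Sum>i<dA. \<Sum>i'<dA. \<Sum>j<m. \<Sum>l<dB.
      X j $$ (i, i') * P $$ (i' * dB + l, i * dB + l))"
    by (rule sum_swap22)
  also have "\<dots> = (\<Sum>i<dA. \<Sum>i'<dA. \<Sum>l<dB.
      (\<Sum>j<m. X j $$ (i, i')) * P $$ (i' * dB + l, i * dB + l))"
  proof -
    have "(\<Sum>j<m. \<Sum>l<dB. X j $$ (i, i') * P $$ (i' * dB + l, i * dB + l))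
       = (\<Sum>l<dB. (\<Sum>j<m. X j $$ (i, i')) * P $$ (i' * dB + l, i * dB + l))" for i i'
      by (subst sum.swap) (simp add: sum_distrib_right)
    thus ?thesis by simp
  qed
  also have "\<dots> = (\<Sum>i<dA. \<Sum>i'<dA. \<Sum>l<dB.
      (if i = i' then P $$ (i * dB + l, i * dB + l) else 0))"
    using XS by (intro sum.cong refl) auto
  also have "\<dots> = (\<Sum>i<dA. \<Sum>l<dB. P $$ (i * dB + l, i * dB + l))"
  proof -
    have "(\<Sum>i'<dA. \<Sum>l<dB. (if i = i' then P $$ (i * dB + l, i * dB + l) else 0))
       = (\<Sum>l<dB. P $$ (i * dB + l, i * dB + l))" if "i < dA" for i
    proof -
      have "(\<Sum>i'<dA. \<Sum>l<dB. (if i = i' then P $$ (i * dB + l, i * dB + l) else 0))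
         = (\<Sum>i'<dA. if i = i' then (\<Sum>l<dB. P $$ (i * dB + l, i * dB + l)) else 0)"
        by (intro sum.cong refl) auto
      also have "\<dots> = (\<Sum>l<dB. P $$ (i * dB + l, i * dB + l))" using that by (simp add: sum.delta)
      finally show ?thesis .
    qed
    thus ?thesis by simp
  qed
  also have "\<dots> = mtrace P"
    using P by (simp add: mtrace_def sum_split)
  finally show ?thesis .
qed

lemma sum2_delta_mod:
  assumes "l < (b::nat)" "l' < b"
  shows "(\<Sum>s<a*b. \<Sum>t<a*b. (if s mod b = l then f s else 0) * P s t * cnj (if t mod b = l' then g t else 0))
    = (\<Sum>x<a. \<Sum>y<a. f (x*b+l) * P (x*b+l) (y*b+l') * cnj (g (y*b+l')))"
proof -
  have "(\<Sum>s<a*b. \<Sum>t<a*b. (if s mod b = l then f s else 0) * P s t * cnj (if t mod b = l' then g t else 0))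
    = (\<Sum>s<a*b. if s mod b = l then (\<Sum>t<a*b. if t mod b = l' then f s * P s t * cnj (g t) else 0) else (0::complex))"
    by (auto intro!: sum.cong)
  also have "\<dots> = (\<Sum>x<a. \<Sum>y<a. f (x*b+l) * P (x*b+l) (y*b+l') * cnj (g (y*b+l')))"
    unfolding sum_split_delta_mod[OF assms(1)] sum_split_delta_mod[OF assms(2)] ..
  finally show ?thesis .
qed

lemma sum_if_const: "(\<Sum>x\<in>A. if c then f x else 0) = (if c then sum f A else 0)"
  by (cases c) simp_all

lemma meas_kraus:
  assumes W: "\<forall>j<m. \<forall>i<dA. \<forall>i'<dA. X j $$ (i,i') = (\<Sum>r<dA. W j r i * cnj (W j r i'))"
    and P: "P \<in> carrier_mat (dA*dB) (dA*dB)" and p: "p < m*dB" and q: "q < m*dB"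
  shows "meas_XB dA dB m X P $$ (p,q) = (\<Sum>r<m*dA. \<Sum>s<dA*dB. \<Sum>t<dA*dB.
     (if r div dA = p div dB then (if s mod dB = p mod dB then cnj (W (r div dA) (r mod dA) (s div dB)) else 0) else 0)
     * P $$ (s,t) *
     cnj (if r div dA = q div dB then (if t mod dB = q mod dB then cnj (W (r div dA) (r mod dA) (t div dB)) else 0) else 0))"
proof -
  define j where "j = p div dB"
  define l where "l = p mod dB"
  define j' where "j' = q div dB"
  define l' where "l' = q mod dB"
  have dB: "dB > 0" using p by (cases dB) auto
  have jm: "j < m" "j' < m" unfolding j_def j'_def using p q by (auto simp: less_mult_imp_div_less)
  have lb: "l < dB" "l' < dB" unfolding l_def l'_def using dB by auto
  define H where "H j0 = (\<Sum>r0<dA. \<Sum>i'<dA. \<Sum>i<dA. cnj (W j0 r0 i') * P $$ (i'*dB+l, i*dB+l') * W j0 r0 i)" for j0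
  have pt: "(\<Sum>s<dA*dB. \<Sum>t<dA*dB.
     (if j0 = j then (if s mod dB = l then cnj (W j0 r0 (s div dB)) else 0) else 0)
     * P $$ (s,t) *
     cnj (if j0 = j' then (if t mod dB = l' then cnj (W j0 r0 (t div dB)) else 0) else 0))
     = (if j0 = j \<and> j0 = j' then (\<Sum>i'<dA. \<Sum>i<dA. cnj (W j0 r0 i') * P $$ (i'*dB+l, i*dB+l') * W j0 r0 i) else 0)"
    for j0 r0
  proof (cases "j0 = j \<and> j0 = j'")
    case True
    hence "(\<Sum>s<dA*dB. \<Sum>t<dA*dB.
     (if j0 = j then (if s mod dB = l then cnj (W j0 r0 (s div dB)) else 0) else 0)
     * P $$ (s,t) *
     cnj (if j0 = j' then (if t mod dB = l' then cnj (W j0 r0 (t div dB)) else 0) else 0))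
     = (\<Sum>s<dA*dB. \<Sum>t<dA*dB. (if s mod dB = l then cnj (W j0 r0 (s div dB)) else 0)
     * P $$ (s,t) * cnj (if t mod dB = l' then cnj (W j0 r0 (t div dB)) else 0))" by simp
    also have "\<dots> = (\<Sum>i'<dA. \<Sum>i<dA. cnj (W j0 r0 ((i'*dB+l) div dB)) * P $$ (i'*dB+l, i*dB+l') * cnj (cnj (W j0 r0 ((i*dB+l') div dB))))"
      by (rule sum2_delta_mod[OF lb])
    also have "\<dots> = (\<Sum>i'<dA. \<Sum>i<dA. cnj (W j0 r0 i') * P $$ (i'*dB+l, i*dB+l') * W j0 r0 i)"
      using lb by simp
    finally show ?thesis using True by simp
  next
    case False thus ?thesis by (cases "j0 = j") auto
  qed
  have "(\<Sum>r<m*dA. \<Sum>s<dA*dB. \<Sum>t<dA*dB.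
     (if r div dA = p div dB then (if s mod dB = p mod dB then cnj (W (r div dA) (r mod dA) (s div dB)) else 0) else 0)
     * P $$ (s,t) *
     cnj (if r div dA = q div dB then (if t mod dB = q mod dB then cnj (W (r div dA) (r mod dA) (t div dB)) else 0) else 0))
    = (\<Sum>j0<m. \<Sum>r0<dA. \<Sum>s<dA*dB. \<Sum>t<dA*dB.
     (if j0 = j then (if s mod dB = l then cnj (W j0 r0 (s div dB)) else 0) else 0)
     * P $$ (s,t) *
     cnj (if j0 = j' then (if t mod dB = l' then cnj (W j0 r0 (t div dB)) else 0) else 0))"
    unfolding sum_split[where a=m and b=dA] j_def l_def j'_def l'_def by (intro sum.cong refl) auto
  also have "\<dots> = (\<Sum>j0<m. if j0 = j \<and> j0 = j' then H j0 else 0)"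
    unfolding pt H_def sum_if_const ..
  also have "\<dots> = (if j = j' then H j else 0)"
  proof -
    have "(\<Sum>j0<m. if j0 = j \<and> j0 = j' then H j0 else 0) = (\<Sum>j0<m. if j0 = j then (if j = j' then H j else 0) else 0)"
      by (intro sum.cong refl) auto
    thus ?thesis using jm by (simp add: sum.delta)
  qed
  also have "\<dots> = meas_XB dA dB m X P $$ (p,q)"
  proof -
    have "H j = (\<Sum>i<dA. \<Sum>i'<dA. X j $$ (i, i') * P $$ (i'*dB+l, i*dB+l'))"
    proof -
      have "(\<Sum>i<dA. \<Sum>i'<dA. X j $$ (i, i') * P $$ (i'*dB+l, i*dB+l'))
          = (\<Sum>i<dA. \<Sum>i'<dA. \<Sum>r0<dA. cnj (W j r0 i') * P $$ (i'*dB+l, i*dB+l') * W j r0 i)"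
        using W jm by (intro sum.cong refl) (simp add: sum_distrib_left sum_distrib_right mult_ac)
      also have "\<dots> = (\<Sum>r0<dA. \<Sum>i<dA. \<Sum>i'<dA. cnj (W j r0 i') * P $$ (i'*dB+l, i*dB+l') * W j r0 i)"
        by (rule sum_rot3)
      also have "\<dots> = H j" unfolding H_def by (intro sum.cong refl sum.swap)
      finally show ?thesis by simp
    qed
    thus ?thesis unfolding meas_XB_def j_def j'_def l_def l'_def using p q by auto
  qed
  finally show ?thesis by simp
qed

lemma povm_decomp:
  assumes "povm dA m X"
  shows "\<exists>W. \<forall>j<m. \<forall>i<dA. \<forall>i'<dA. X j $$ (i,i') = (\<Sum>r<dA. W j r i * cnj (W j r i'))"
proof -
  define W where "W j = (SOME W. \<forall>i<dA. \<forall>i'<dA. X j $$ (i,i') = (\<Sum>r<dA. W r i * cnj (W r i')))" for j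
  have "\<forall>j<m. \<forall>i<dA. \<forall>i'<dA. X j $$ (i,i') = (\<Sum>r<dA. W j r i * cnj (W j r i'))"
  proof (rule allI, rule impI)
    fix j assume "j < m"
    hence "psd dA (X j)" using assms unfolding povm_def by blast
    from someI_ex[OF psd_decomp[OF this]]
    show "\<forall>i<dA. \<forall>i'<dA. X j $$ (i,i') = (\<Sum>r<dA. W j r i * cnj (W j r i'))" unfolding W_def .
  qed
  thus ?thesis by blast
qed

lemma tpcpm_meas:
  assumes X: "povm dA m X"
  shows "tpcpm (dA*dB) (m*dB) (meas_XB dA dB m X)"
proof -
  obtain W where W: "\<forall>j<m. \<forall>i<dA. \<forall>i'<dA. X j $$ (i,i') = (\<Sum>r<dA. W j r i * cnj (W j r i'))"
    using povm_decomp[OF X] by blast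
  show ?thesis unfolding tpcpm_def
  proof (intro conjI ballI allI impI)
    fix P :: "complex mat" assume P: "P \<in> carrier_mat (dA*dB) (dA*dB)"
    show "meas_XB dA dB m X P \<in> carrier_mat (m*dB) (m*dB)" unfolding meas_XB_def by simp
    fix c show "meas_XB dA dB m X (c \<cdot>\<^sub>m P) = c \<cdot>\<^sub>m meas_XB dA dB m X P" by (rule meas_scale[OF P])
  next
    fix P Q :: "complex mat" assume "P \<in> carrier_mat (dA*dB) (dA*dB)" "Q \<in> carrier_mat (dA*dB) (dA*dB)"
    thus "meas_XB dA dB m X (P + Q) = meas_XB dA dB m X P + meas_XB dA dB m X Q" by (rule meas_linear)
  next
    fix P :: "complex mat" assume "P \<in> carrier_mat (dA*dB) (dA*dB)"
    thus "mtrace (meas_XB dA dB m X P) = mtrace P" by (rule meas_trace[OF X])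
  next
    fix k and M :: "complex mat" assume M: "psd (k * (dA*dB)) M"
    show "psd (k * (m*dB)) (id_tensor k (dA*dB) (m*dB) (meas_XB dA dB m X) M)"
    proof (rule kraus_cp[where R="m*dA" and K="\<lambda>r p s. (if r div dA = p div dB then (if s mod dB = p mod dB then cnj (W (r div dA) (r mod dA) (s div dB)) else 0) else 0)", OF _ _ M])
      show "\<forall>P::complex mat\<in>carrier_mat (dA*dB) (dA*dB). meas_XB dA dB m X P \<in> carrier_mat (m*dB) (m*dB)"
        unfolding meas_XB_def by simp
      show "\<forall>P::complex mat\<in>carrier_mat (dA*dB) (dA*dB). \<forall>p<m*dB. \<forall>q<m*dB. meas_XB dA dB m X P $$ (p, q) =
        (\<Sum>r<m*dA. \<Sum>s<dA*dB. \<Sum>t<dA*dB.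
         (if r div dA = p div dB then (if s mod dB = p mod dB then cnj (W (r div dA) (r mod dA) (s div dB)) else 0) else 0)
         * P $$ (s,t) *
         cnj (if r div dA = q div dB then (if t mod dB = q mod dB then cnj (W (r div dA) (r mod dA) (t div dB)) else 0) else 0))"
        using meas_kraus[OF W] by blast
    qed
  qed
qed

lemma psd_blockdiag:
  assumes S: "psd dB \<sigma>" and A: "A \<in> carrier_mat (d*dB) (d*dB)"
    and E: "\<forall>p<d*dB. \<forall>q<d*dB. A $$ (p,q) = (if p div dB = q div dB then w (p div dB) * cnj (w (p div dB)) * \<sigma> $$ (p mod dB, q mod dB) else 0)"
  shows "psd (d*dB) A"
proof (rule kraus_psd[where R=d and ns="\<lambda>_. dB" and Ms="\<lambda>_. \<sigma>"
     and K="\<lambda>r p s. if s = p mod dB then (if p div dB = r then w r else 0) else 0", OF A])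
  show "\<forall>r<d. psd dB \<sigma>" using S by simp
  show "\<forall>p<d*dB. \<forall>q<d*dB. A $$ (p,q) = (\<Sum>r<d. \<Sum>s<dB. \<Sum>t<dB.
     (if s = p mod dB then (if p div dB = r then w r else 0) else 0) * \<sigma> $$ (s,t) *
     cnj (if t = q mod dB then (if q div dB = r then w r else 0) else 0))"
  proof (intro allI impI)
    fix p q assume p: "p < d*dB" and q: "q < d*dB"
    have dB: "dB > 0" using p by (cases dB) auto
    have pd: "p div dB < d" "q div dB < d" using p q by (auto simp: less_mult_imp_div_less)
    have "(\<Sum>r<d. \<Sum>s<dB. \<Sum>t<dB.
     (if s = p mod dB then (if p div dB = r then w r else 0) else 0) * \<sigma> $$ (s,t) *
     cnj (if t = q mod dB then (if q div dB = r then w r else 0) else 0))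
     = (\<Sum>r<d. (if p div dB = r then w r else 0) * \<sigma> $$ (p mod dB, q mod dB) * cnj (if q div dB = r then w r else 0))"
      unfolding sum2_delta[OF finite_lessThan finite_lessThan] using dB by simp
    also have "\<dots> = (\<Sum>r<d. if r = p div dB then (if p div dB = q div dB then w (p div dB) * cnj (w (p div dB)) * \<sigma> $$ (p mod dB, q mod dB) else 0) else 0)"
      by (intro sum.cong refl) auto
    also have "\<dots> = A $$ (p,q)" using pd E p q by (simp add: sum.delta)
    finally show "A $$ (p,q) = (\<Sum>r<d. \<Sum>s<dB. \<Sum>t<dB.
     (if s = p mod dB then (if p div dB = r then w r else 0) else 0) * \<sigma> $$ (s,t) *
     cnj (if t = q mod dB then (if q div dB = r then w r else 0) else 0))" by simp
  qed
qed

lemma kron_one_entry: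
  assumes S: "\<sigma> \<in> carrier_mat dB dB" and p: "p < d*dB" and q: "q < d*dB"
  shows "kron (1\<^sub>m d) \<sigma> $$ (p,q) = (if p div dB = q div dB then \<sigma> $$ (p mod dB, q mod dB) else 0)"
proof -
  have pd: "p div dB < d" "q div dB < d" using p q by (auto simp: less_mult_imp_div_less)
  show ?thesis unfolding kron_def using S p q pd by simp
qed

lemma kron_one_carrier: "\<sigma> \<in> carrier_mat dB dB \<Longrightarrow> kron (1\<^sub>m d) \<sigma> \<in> carrier_mat (d*dB) (d*dB)"
  unfolding kron_def by simp

lemma psd_kron_one:
  assumes S: "psd dB \<sigma>"
  shows "psd (d*dB) (kron (1\<^sub>m d) \<sigma>)"
proof -
  have Sc: "\<sigma> \<in> carrier_mat dB dB" using S unfolding psd_def by simp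
  show ?thesis
    by (rule psd_blockdiag[where w="\<lambda>_. 1", OF S kron_one_carrier[OF Sc]])
      (simp add: kron_one_entry[OF Sc])
qed

lemma psd_ptrace:
  assumes R: "psd (dA*dB) \<rho>"
  shows "psd dB (ptrace_A dA dB \<rho>)"
proof (rule kraus_psd[where R=dA and ns="\<lambda>_. dA*dB" and Ms="\<lambda>_. \<rho>"
     and K="\<lambda>r p s. if s = r*dB + p then 1 else 0"])
  show "ptrace_A dA dB \<rho> \<in> carrier_mat dB dB" unfolding ptrace_A_def by simp
  show "\<forall>r<dA. psd (dA*dB) \<rho>" using R by simp
  show "\<forall>p<dB. \<forall>q<dB. ptrace_A dA dB \<rho> $$ (p,q) = (\<Sum>r<dA. \<Sum>s<dA*dB. \<Sum>t<dA*dB.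
     (if s = r*dB + p then 1 else 0) * \<rho> $$ (s,t) * cnj (if t = r*dB + q then 1 else 0))"
  proof (intro allI impI)
    fix p q assume p: "p < dB" and q: "q < dB"
    have "(\<Sum>r<dA. \<Sum>s<dA*dB. \<Sum>t<dA*dB.
     (if s = r*dB + p then 1 else 0) * \<rho> $$ (s,t) * cnj (if t = r*dB + q then 1 else 0))
      = (\<Sum>r<dA. \<rho> $$ (r*dB + p, r*dB + q))"
      unfolding sum2_delta[OF finite_lessThan finite_lessThan] using p q lt_mult_add
      by (intro sum.cong refl) auto
    thus "ptrace_A dA dB \<rho> $$ (p,q) = (\<Sum>r<dA. \<Sum>s<dA*dB. \<Sum>t<dA*dB.
     (if s = r*dB + p then 1 else 0) * \<rho> $$ (s,t) * cnj (if t = r*dB + q then 1 else 0))"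
      unfolding ptrace_A_def using p q by simp
  qed
qed

lemma id_tensor_1:
  assumes M: "M \<in> carrier_mat n n" and EM: "E M \<in> carrier_mat m m"
  shows "id_tensor 1 n m E M = E M"
proof -
  have B: "mat n n (\<lambda>(s, t). M $$ (s, t)) = M" using M by (intro eq_matI) auto
  show ?thesis
  proof (rule eq_matI)
    fix i j assume "i < dim_row (E M)" "j < dim_col (E M)"
    hence ij: "i < m" "j < m" using EM by auto
    show "id_tensor 1 n m E M $$ (i, j) = E M $$ (i, j)"
      unfolding id_tensor_def using ij B by simp
  qed (use EM in \<open>auto simp: id_tensor_def\<close>)
qed

lemma tpcpm_psd:
  assumes E: "tpcpm n m E" and S: "psd n S"
  shows "psd m (E S)"
proof -
  have Sc: "S \<in> carrier_mat n n" using S unfolding psd_def by simp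
  have ES: "E S \<in> carrier_mat m m" using E Sc unfolding tpcpm_def by blast
  have "\<forall>k M. psd (k*n) M \<longrightarrow> psd (k*m) (id_tensor k n m E M)" using E unfolding tpcpm_def by blast
  hence "psd (1*n) S \<longrightarrow> psd (1*m) (id_tensor 1 n m E S)" by blast
  hence "psd (1*m) (id_tensor 1 n m E S)" using S by simp
  thus ?thesis using id_tensor_1[where E=E, OF Sc ES] by simp
qed

lemma meas_kron:
  assumes Xc: "\<forall>j<m. X j \<in> carrier_mat dA dA" and S: "\<sigma> \<in> carrier_mat dB dB"
    and p: "p < m*dB" and q: "q < m*dB"
  shows "meas_XB dA dB m X (kron (1\<^sub>m dA) \<sigma>) $$ (p,q) =
    (if p div dB = q div dB then mtrace (X (p div dB)) * \<sigma> $$ (p mod dB, q mod dB) else 0)"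
proof -
  have dB: "dB > 0" using p by (cases dB) auto
  have pd: "p div dB < m" using p by (auto simp: less_mult_imp_div_less)
  have e: "kron (1\<^sub>m dA) \<sigma> $$ (i' * dB + p mod dB, i * dB + q mod dB) = (if i' = i then \<sigma> $$ (p mod dB, q mod dB) else 0)"
    if "i < dA" "i' < dA" for i i'
    using kron_one_entry[OF S idx_bound[OF that(2) p] idx_bound[OF that(1) q]] dB by simp
  have "(\<Sum>i<dA. \<Sum>i'<dA. X (p div dB) $$ (i, i') * kron (1\<^sub>m dA) \<sigma> $$ (i' * dB + p mod dB, i * dB + q mod dB))
     = (\<Sum>i<dA. \<Sum>i'<dA. if i' = i then X (p div dB) $$ (i, i) * \<sigma> $$ (p mod dB, q mod dB) else 0)"
    using e by (intro sum.cong refl) auto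
  also have "\<dots> = (\<Sum>i<dA. X (p div dB) $$ (i, i)) * \<sigma> $$ (p mod dB, q mod dB)"
    by (simp add: sum.delta sum_distrib_right)
  also have "\<dots> = mtrace (X (p div dB)) * \<sigma> $$ (p mod dB, q mod dB)"
  proof -
    have "dim_row (X (p div dB)) = dA" using Xc pd by auto
    thus ?thesis unfolding mtrace_def by simp
  qed
  finally show ?thesis unfolding meas_XB_def using p q by auto
qed

lemma ptrace_meas:
  assumes X: "povm dA m X" and R: "\<rho> \<in> carrier_mat (dA*dB) (dA*dB)"
  shows "ptrace_A m dB (meas_XB dA dB m X \<rho>) = ptrace_A dA dB \<rho>"
proof (rule eq_matI)
  have XS: "\<forall>i<dA. \<forall>i'<dA. (\<Sum>j<m. X j $$ (i, i')) = (if i = i' then 1 else 0)"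
    using X unfolding povm_def by blast
  fix k l assume "k < dim_row (ptrace_A dA dB \<rho>)" "l < dim_col (ptrace_A dA dB \<rho>)"
  hence kl: "k < dB" "l < dB" unfolding ptrace_A_def by auto
  have "ptrace_A m dB (meas_XB dA dB m X \<rho>) $$ (k,l) = (\<Sum>j<m. \<Sum>i<dA. \<Sum>i'<dA.
      X j $$ (i, i') * \<rho> $$ (i' * dB + k, i * dB + l))"
    unfolding ptrace_A_def meas_XB_def using kl lt_mult_add by (auto intro!: sum.cong)
  also have "\<dots> = (\<Sum>i<dA. \<Sum>i'<dA. (\<Sum>j<m. X j $$ (i, i')) * \<rho> $$ (i' * dB + k, i * dB + l))"
  proof -
    have "(\<Sum>j<m. \<Sum>i<dA. \<Sum>i'<dA. X j $$ (i, i') * \<rho> $$ (i' * dB + k, i * dB + l))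
      = (\<Sum>i<dA. \<Sum>i'<dA. \<Sum>j<m. X j $$ (i, i') * \<rho> $$ (i' * dB + k, i * dB + l))"
      by (rule sum_rot3[symmetric])
    thus ?thesis by (simp add: sum_distrib_right)
  qed
  also have "\<dots> = (\<Sum>i<dA. \<Sum>i'<dA. if i = i' then \<rho> $$ (i' * dB + k, i * dB + l) else 0)"
    using XS by (intro sum.cong refl) auto
  also have "\<dots> = ptrace_A dA dB \<rho> $$ (k,l)"
    unfolding ptrace_A_def using kl by (simp add: sum.delta)
  finally show "ptrace_A m dB (meas_XB dA dB m X \<rho>) $$ (k,l) = ptrace_A dA dB \<rho> $$ (k,l)" .
qed (auto simp: ptrace_A_def)

lemma addblk_dsum:
  assumes A: "A \<in> carrier_mat N N" and B: "B \<in> carrier_mat N N"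
  shows "addblk N (dsum A B) = mat N N (\<lambda>(i,j). A$$(i,j) + B$$(i,j))"
  unfolding addblk_def dsum_def using A B by (intro eq_matI) auto

lemma psd_zero: "psd N (0\<^sub>m N N)"
proof -
  have "qform N (0\<^sub>m N N) v = 0" for v unfolding qform_def by simp
  thus ?thesis unfolding psd_def by simp
qed

lemma psd_trace_real:
  assumes "psd n M"
  shows "Im (mtrace M) = 0" "Re (mtrace M) \<ge> 0"
proof -
  have d: "dim_row M = n" using assms unfolding psd_def by auto
  show "Im (mtrace M) = 0" unfolding mtrace_def d Im_sum using psd_diag(1)[OF assms] by simp
  show "Re (mtrace M) \<ge> 0" unfolding mtrace_def d Re_sum using psd_diag(2)[OF assms] by (auto intro!: sum_nonneg)
qed

lemma key:
  assumes D: "rel_K_entropy b D" and X: "povm dA m X" and R: "psd (dA*dB) \<rho>" and S: "psd dB \<sigma>"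
    and c: "c > 0" and cX: "\<forall>j<m. Re (mtrace (X j)) \<le> c"
  shows "D (meas_XB dA dB m X \<rho>) (kron (1\<^sub>m m) \<sigma>) + ereal (log b (1/c)) \<le> D \<rho> (kron (1\<^sub>m dA) \<sigma>)"
proof -
  let ?E = "meas_XB dA dB m X"
  define N where "N = m*dB"
  let ?I1 = "kron (1\<^sub>m dA) \<sigma>"
  let ?K1 = "kron (1\<^sub>m m) \<sigma>"
  have Da: "\<And>n m E S T. tpcpm n m E \<Longrightarrow> psd n S \<Longrightarrow> psd n T \<Longrightarrow> D (E S) (E T) \<le> D S T"
    using D unfolding rel_K_entropy_def by blast
  have Db: "\<And>n n' S T T'. psd n S \<Longrightarrow> psd n T \<Longrightarrow> psd n' T' \<Longrightarrow>
        D (dsum S (0\<^sub>m n' n')) (dsum T T') = D S T"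
    using D unfolding rel_K_entropy_def by blast
  have Dc: "\<And>n S T c. psd n S \<Longrightarrow> psd n T \<Longrightarrow> c > 0 \<Longrightarrow>
        D S (complex_of_real c \<cdot>\<^sub>m T) = D S T + ereal (log b (1 / c))"
    using D unfolding rel_K_entropy_def by blast
  have Sc: "\<sigma> \<in> carrier_mat dB dB" using S unfolding psd_def by simp
  have Xc: "\<forall>j<m. X j \<in> carrier_mat dA dA" using X unfolding povm_def psd_def by blast
  have tE: "tpcpm (dA*dB) N ?E" unfolding N_def by (rule tpcpm_meas[OF X])
  have I1: "psd (dA*dB) ?I1" by (rule psd_kron_one[OF S])
  have K1: "psd N ?K1" unfolding N_def by (rule psd_kron_one[OF S])
  have Er: "psd N (?E \<rho>)" by (rule tpcpm_psd[OF tE R])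
  have EI: "psd N (?E ?I1)" by (rule tpcpm_psd[OF tE I1])
  define T2 where "T2 = complex_of_real c \<cdot>\<^sub>m ?K1 - ?E ?I1"
  have T2: "psd N T2"
    unfolding N_def
  proof (rule psd_blockdiag[OF S, where w="\<lambda>j. complex_of_real (sqrt (c - Re (mtrace (X j))))"])
    have "?E ?I1 \<in> carrier_mat (m * dB) (m * dB)" unfolding meas_XB_def by (rule mat_carrier)
    thus "T2 \<in> carrier_mat (m * dB) (m * dB)" unfolding T2_def by (rule minus_carrier_mat)
    show "\<forall>p<m * dB. \<forall>q<m * dB. T2 $$ (p, q) = (if p div dB = q div dB
       then complex_of_real (sqrt (c - Re (mtrace (X (p div dB))))) * cnj (complex_of_real (sqrt (c - Re (mtrace (X (p div dB))))))
         * \<sigma> $$ (p mod dB, q mod dB) else 0)"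
    proof (intro allI impI)
      fix p q assume p: "p < m*dB" and q: "q < m*dB"
      define j where "j = p div dB"
      have j: "j < m" unfolding j_def using p by (auto simp: less_mult_imp_div_less)
      have tr: "mtrace (X j) = complex_of_real (Re (mtrace (X j)))"
        using psd_trace_real(1)[of dA "X j"] X j unfolding povm_def by (simp add: complex_eq_iff)
      have le: "Re (mtrace (X j)) \<le> c" using cX j by blast
      have w: "complex_of_real (sqrt (c - Re (mtrace (X j)))) * cnj (complex_of_real (sqrt (c - Re (mtrace (X j)))))
          = complex_of_real c - mtrace (X j)"
      proof -
        have "sqrt (c - Re (mtrace (X j))) * sqrt (c - Re (mtrace (X j))) = c - Re (mtrace (X j))"
          using le by simp
        hence "complex_of_real (sqrt (c - Re (mtrace (X j)))) * cnj (complex_of_real (sqrt (c - Re (mtrace (X j)))))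
          = complex_of_real (c - Re (mtrace (X j)))"
          by (metis complex_cnj_complex_of_real of_real_mult)
        also have "\<dots> = complex_of_real c - mtrace (X j)" using tr by (metis of_real_diff)
        finally show ?thesis .
      qed
      have "T2 $$ (p,q) = complex_of_real c * ?K1 $$ (p,q) - ?E ?I1 $$ (p,q)"
        unfolding T2_def using p q kron_one_carrier[OF Sc, of m] by (simp add: meas_XB_def)
      also have "\<dots> = (if j = q div dB then (complex_of_real c - mtrace (X j)) * \<sigma> $$ (p mod dB, q mod dB) else 0)"
        unfolding kron_one_entry[OF Sc p q] meas_kron[OF Xc Sc p q] j_def by (simp add: algebra_simps)
      finally show "T2 $$ (p,q) = (if p div dB = q div dB
       then complex_of_real (sqrt (c - Re (mtrace (X (p div dB))))) * cnj (complex_of_real (sqrt (c - Re (mtrace (X (p div dB))))))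
         * \<sigma> $$ (p mod dB, q mod dB) else 0)" unfolding j_def[symmetric] w .
    qed
  qed
  have Erc: "?E \<rho> \<in> carrier_mat N N" and EIc: "?E ?I1 \<in> carrier_mat N N" and T2c: "T2 \<in> carrier_mat N N"
    using Er EI T2 unfolding psd_def by auto
  have K1c: "?K1 \<in> carrier_mat N N" using K1 unfolding psd_def by auto
  have s1: "D (?E \<rho>) (?E ?I1) \<le> D \<rho> ?I1" by (rule Da[OF tE R I1])
  have s2: "D (dsum (?E \<rho>) (0\<^sub>m N N)) (dsum (?E ?I1) T2) = D (?E \<rho>) (?E ?I1)"
    by (rule Db[OF Er EI T2])
  have ps1: "psd (2*N) (dsum (?E \<rho>) (0\<^sub>m N N))" using psd_dsum[OF Er psd_zero[of N]] by (simp add: mult_2)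
  have ps2: "psd (2*N) (dsum (?E ?I1) T2)" using psd_dsum[OF EI T2] by (simp add: mult_2)
  have s3: "D (addblk N (dsum (?E \<rho>) (0\<^sub>m N N))) (addblk N (dsum (?E ?I1) T2))
      \<le> D (dsum (?E \<rho>) (0\<^sub>m N N)) (dsum (?E ?I1) T2)"
    by (rule Da[OF tpcpm_addblk ps1 ps2])
  have f1: "addblk N (dsum (?E \<rho>) (0\<^sub>m N N)) = ?E \<rho>"
    unfolding addblk_dsum[OF Erc zero_carrier_mat] using Erc by (intro eq_matI) auto
  have f2: "addblk N (dsum (?E ?I1) T2) = complex_of_real c \<cdot>\<^sub>m ?K1"
    unfolding addblk_dsum[OF EIc T2c] using EIc K1c T2c unfolding T2_def by (intro eq_matI) auto
  have s4: "D (?E \<rho>) (complex_of_real c \<cdot>\<^sub>m ?K1) = D (?E \<rho>) ?K1 + ereal (log b (1 / c))"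
    by (rule Dc[OF Er K1 c])
  show ?thesis using s1 s2 s3 s4 f1 f2 by simp
qed

lemma ereal_neg_shift: "x + ereal r \<le> y \<Longrightarrow> ereal r + - y \<le> - (x::ereal)"
  by (cases x; cases y) auto

lemma cprime_props:
  assumes X: "povm dA m X" and dA: "dA > 0"
  shows "c_prime m X > 0" "\<forall>j<m. Re (mtrace (X j)) \<le> c_prime m X"
proof -
  have XS: "\<forall>i<dA. \<forall>i'<dA. (\<Sum>j<m. X j $$ (i, i')) = (if i = i' then 1 else 0)"
    using X unfolding povm_def by blast
  have Xc: "\<forall>j<m. X j \<in> carrier_mat dA dA" using X unfolding povm_def psd_def by blast
  have m: "m > 0"
  proof (rule ccontr)
    assume "\<not> m > 0" hence "m = 0" by simp
    moreover have "(\<Sum>j<m. X j $$ (0, 0)) = 1" using XS dA by simp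
    ultimately show False by simp
  qed
  let ?S = "(\<lambda>j. Re (mtrace (X j))) ` {..<m}"
  have fin: "finite ?S" and ne: "?S \<noteq> {}" using m by auto
  show le: "\<forall>j<m. Re (mtrace (X j)) \<le> c_prime m X"
    unfolding c_prime_def using fin by auto
  have "(\<Sum>j<m. mtrace (X j)) = (\<Sum>j<m. \<Sum>i<dA. X j $$ (i,i))"
    unfolding mtrace_def using Xc by (intro sum.cong refl) auto
  also have "\<dots> = (\<Sum>i<dA. \<Sum>j<m. X j $$ (i,i))" by (rule sum.swap)
  also have "\<dots> = of_nat dA" using XS by simp
  finally have tsum: "(\<Sum>j<m. mtrace (X j)) = of_nat dA" .
  have "(\<Sum>j<m. Re (mtrace (X j))) = Re (\<Sum>j<m. mtrace (X j))" by (simp add: Re_sum)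
  also have "\<dots> = real dA" unfolding tsum by simp
  finally have "(\<Sum>j<m. Re (mtrace (X j))) = real dA" .
  hence "(\<Sum>j<m. Re (mtrace (X j))) > 0" using dA by simp
  then obtain j where "j < m" "Re (mtrace (X j)) > 0"
    by (metis (no_types, lifting) lessThan_iff not_le sum_nonpos)
  thus "c_prime m X > 0" using le by force
qed

theorem lemma3:
  fixes D :: "complex mat \<Rightarrow> complex mat \<Rightarrow> ereal"
    and b :: real and first_form :: bool
    and dA dB m :: nat and X :: "nat \<Rightarrow> complex mat" and \<rho> :: "complex mat"
  assumes "b > 0" and "b \<noteq> 1"
    and "rel_K_entropy b D"
    and "povm dA m X"
    and "density (dA * dB) \<rho>"
  shows "cond_K_entropy D first_form m dB (meas_XB dA dB m X \<rho>)
           \<ge> ereal (log b (1 / c_prime m X)) + cond_K_entropy D first_form dA dB \<rho>"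
proof -
  note D = assms(3) and X = assms(4)
  have R: "psd (dA*dB) \<rho>" and tr1: "mtrace \<rho> = 1" using assms(5) unfolding density_def by auto
  have Rc: "\<rho> \<in> carrier_mat (dA*dB) (dA*dB)" using R unfolding psd_def by simp
  have "dA * dB \<noteq> 0"
  proof
    assume "dA * dB = 0"
    hence "dim_row \<rho> = 0" using Rc by simp
    hence "mtrace \<rho> = 0" unfolding mtrace_def by simp
    thus False using tr1 by simp
  qed
  hence dA: "dA > 0" by simp
  define c where "c = c_prime m X"
  have c: "c > 0" and cX: "\<forall>j<m. Re (mtrace (X j)) \<le> c" using cprime_props[OF X dA] unfolding c_def by auto
  show ?thesis
  proof (cases first_form)
    case True
    define \<sigma> where "\<sigma> = ptrace_A dA dB \<rho>"
    have S: "psd dB \<sigma>" unfolding \<sigma>_def by (rule psd_ptrace[OF R])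
    have k: "D (meas_XB dA dB m X \<rho>) (kron (1\<^sub>m m) \<sigma>) + ereal (log b (1/c)) \<le> D \<rho> (kron (1\<^sub>m dA) \<sigma>)"
      by (rule key[OF D X R S c cX])
    show ?thesis unfolding cond_K_entropy_def using True ereal_neg_shift[OF k]
      unfolding ptrace_meas[OF X Rc] \<sigma>_def c_def by simp
  next
    case False
    let ?I = "{\<sigma>. density dB \<sigma>}"
    have k: "ereal (log b (1/c)) + - D \<rho> (kron (1\<^sub>m dA) \<sigma>) \<le> - D (meas_XB dA dB m X \<rho>) (kron (1\<^sub>m m) \<sigma>)"
      if "\<sigma> \<in> ?I" for \<sigma>
    proof -
      have S: "psd dB \<sigma>" using that unfolding density_def by simp
      show ?thesis by (rule ereal_neg_shift[OF key[OF D X R S c cX]])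
    qed
    have "ereal (log b (1/c)) + (SUP \<sigma>\<in>?I. - D \<rho> (kron (1\<^sub>m dA) \<sigma>))
        \<le> (SUP \<sigma>\<in>?I. - D (meas_XB dA dB m X \<rho>) (kron (1\<^sub>m m) \<sigma>))"
    proof (cases "?I = {}")
      case True thus ?thesis by (simp add: bot_ereal_def)
    next
      case ne: False
      have "ereal (log b (1/c)) + (SUP \<sigma>\<in>?I. - D \<rho> (kron (1\<^sub>m dA) \<sigma>))
          = (SUP \<sigma>\<in>?I. ereal (log b (1/c)) + - D \<rho> (kron (1\<^sub>m dA) \<sigma>))"
        by (rule SUP_ereal_add_right[symmetric, OF ne]) simp
      also have "\<dots> \<le> (SUP \<sigma>\<in>?I. - D (meas_XB dA dB m X \<rho>) (kron (1\<^sub>m m) \<sigma>))"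
        using k by (intro SUP_mono) blast
      finally show ?thesis .
    qed
    thus ?thesis unfolding cond_K_entropy_def c_def using False by simp
  qed
qed

end
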